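(* Let $P\in\mathcal{P}$, $\alpha\in(0,1]$ and $Q\in P^\alpha$. Then, almost surely, $Q\in\liminf_n P_n^\alpha$; i.e. almost surely there exists a sequence $\{Q_n\}_n$ with $Q_n\in P_n^\alpha$ for all $n$ and $Q_n\to Q$ weakly.
   Context: $\mathcal{P}$ denotes the set of all probability measures on $(\mathbb{R}^d,\mathcal{B}_d)$, $\mathcal{B}_d$ the Borel $\sigma$-algebra, endowed with the topology of weak convergence. For $R\in\mathcal{P}$ and $\alpha\in(0,1]$, the $\alpha$-trimming of $R$ is $R^\alpha=\{Q\in\mathcal{P} : Q(B)\le \alpha^{-1}R(B)\text{ for all } B\in\mathcal{B}_d\}$. $\{X_i\}_{i\ge1}$ are i.i.d. random vectors in $\mathbb{R}^d$ with law $P$, and $P_n=\frac1n\sum_{i=1}^n\delta_{X_i}$ is the empirical probability. For sets $A_n\subset\mathcal{P}$, $\liminf_n A_n=\{Q\in\mathcal{P}:\exists\, Q_n\in A_n \text{ for all } n \text{ with } Q_n\to Q \text{ weakly}\}$ and $\limsup_n A_n=\{Q\in\mathcal{P}:\exists\, n_1<n_2<\dots,\ Q_{n_k}\in A_{n_k},\ Q_{n_k}\to Q\text{ weakly}\}$. *)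

theory Defs
  imports "HOL-Probability.Probability"
begin

text \<open>Probability measures on (R^d, Borel sets); R^d is modelled by an arbitrary
  Euclidean space type 'a.\<close>
definition prob_measures :: "'a::euclidean_space measure set" where
  "prob_measures = {Q. sets Q = sets (borel :: 'a measure) \<and> prob_space Q}"

definition trimming :: "'a::euclidean_space measure \<Rightarrow> real \<Rightarrow> 'a measure set" where
  "trimming R \<alpha> = {Q \<in> prob_measures.
      \<forall>B \<in> sets (borel :: 'a measure). measure Q B \<le> measure R B / \<alpha>}"

definition weakly_conv :: "(nat \<Rightarrow> 'a::euclidean_space measure) \<Rightarrow> 'a measure \<Rightarrow> bool" where
  "weakly_conv Qs Q \<longleftrightarrow> (\<forall>f :: 'a \<Rightarrow> real. continuous_on UNIV f \<and> bounded (range f) \<longrightarrow>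
      (\<lambda>n. integral\<^sup>L (Qs n) f) \<longlonglongrightarrow> integral\<^sup>L Q f)"

text \<open>Empirical measure P_n = (1/n) sum_{i<n} delta_{X_i(omega)} (observations indexed from 0).\<close>
definition empirical :: "(nat \<Rightarrow> 'w \<Rightarrow> 'a::euclidean_space) \<Rightarrow> nat \<Rightarrow> 'w \<Rightarrow> 'a measure" where
  "empirical X n \<omega> = measure_of UNIV (sets (borel :: 'a measure))
      (\<lambda>B. ennreal (real (card {i. i < n \<and> X i \<omega> \<in> B}) / real n))"

end

theory Submission
  imports Defs
begin


lemma slln_bounded:
  fixes M :: "'w measure" and X :: "nat \<Rightarrow> 'w \<Rightarrow> 'a::euclidean_space" and u :: "'a \<Rightarrow> real"
  assumes M: "prob_space M"
    and ind: "prob_space.indep_vars M (\<lambda>_. borel) X UNIV"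
    and Xm: "\<And>i. X i \<in> borel_measurable M"
    and XP: "\<And>i. distr M borel (X i) = P"
    and um[measurable]: "u \<in> borel_measurable borel" and ub: "\<And>x. \<bar>u x\<bar> \<le> K"
  shows "AE \<omega> in M. (\<lambda>n. (\<Sum>i<n. u (X i \<omega>)) / n) \<longlonglongrightarrow> (\<integral>x. u x \<partial>P)"
proof -
  interpret prob_space M by fact
  define Y where "Y i = (\<lambda>\<omega>. u (X i \<omega>))" for i
  have Ym[measurable]: "Y i \<in> borel_measurable M" for i
    unfolding Y_def using Xm[of i] by measurable
  have indY: "indep_vars (\<lambda>_. borel) Y UNIV"
    unfolding Y_def by (rule indep_vars_compose2[OF ind]) auto
  have distrY: "distr M borel (Y i) = distr M borel (Y 0)" for i
  proof -
    have "distr M borel (Y i) = distr (distr M borel (X i)) borel u"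
      unfolding Y_def using Xm[of i] by (subst distr_distr) (auto simp: comp_def)
    also have "\<dots> = distr (distr M borel (X 0)) borel u" by (simp add: XP)
    also have "\<dots> = distr M borel (Y 0)"
      unfolding Y_def using Xm[of 0] by (subst distr_distr) (auto simp: comp_def)
    finally show ?thesis .
  qed
  have EY: "expectation (Y 0) = (\<integral>x. u x \<partial>P)"
  proof -
    have "(\<integral>x. u x \<partial>P) = (\<integral>x. u x \<partial>distr M borel (X 0))" by (simp add: XP)
    also have "\<dots> = expectation (Y 0)" unfolding Y_def using Xm[of 0]
      by (subst integral_distr) auto
    finally show ?thesis by simp
  qed
  define c where "c = K + 1"
  have cpos: "c > 0" unfolding c_def using ub[of 0] by linarith
  define A where "A e n = {\<omega>\<in>space M. \<bar>(\<Sum>i\<in>{..<Suc n}. Y i \<omega>) / real (card {..<Suc n}) - expectation (Y 0)\<bar> \<ge> e}" for e n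
  have bnd: "prob (A e n) \<le> 2 * exp (-2 * real (Suc n) * e\<^sup>2 / (2*c)\<^sup>2)" if e: "e \<ge> 0" for e n
  proof -
    have H: "Hoeffding_ineq_iid M {..<Suc n} Y (Y 0) (-c) c"
      unfolding Hoeffding_ineq_iid_def
    proof (rule iid_interval_bounded_random_variables.intro[OF M])
      show "iid_interval_bounded_random_variables_axioms M {..<Suc n} Y (Y 0) (-c) c"
      proof (rule iid_interval_bounded_random_variables_axioms.intro)
        show "AE x in M. Y 0 x \<in> {-c..c}"
        proof (rule AE_I2)
          fix x have "\<bar>u (X 0 x)\<bar> \<le> K" by (rule ub)
          then show "Y 0 x \<in> {-c..c}" unfolding Y_def c_def by auto
        qed
        show "indep_vars (\<lambda>_. borel) Y {..<Suc n}" by (rule indep_vars_subset[OF indY]) auto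
        show "finite {..<Suc n}" by simp
        show "\<And>i. i \<in> {..<Suc n} \<Longrightarrow> distr M borel (Y i) = distr M borel (Y 0)" by (rule distrY)
        show "random_variable borel (Y 0)" by (rule Ym)
      qed
    qed
    have ne: "{..<Suc n} \<noteq> {}" by auto
    have ac: "-c < c" using cpos by simp
    from Hoeffding_ineq_iid.Hoeffding_ineq_abs_ge'[OF H e ac ne]
    show ?thesis unfolding A_def by simp
  qed
  have ev: "AE \<omega> in M. eventually (\<lambda>n. \<omega> \<in> space M - A (1 / Suc k) n) sequentially" for k
  proof (rule borel_cantelli_AE1)
    show "A (1 / Suc k) n \<in> sets M" for n unfolding A_def by measurable
    show "emeasure M (A (1 / Suc k) n) < \<infinity>" for n by (simp add: less_top[symmetric])
    define q where "q = exp (-2 * (1 / Suc k)\<^sup>2 / (2*c)\<^sup>2)"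
    have q: "q < 1" "0 < q" unfolding q_def using cpos by auto
    have sg: "summable (\<lambda>n. 2 * q ^ Suc n)" using q by (intro summable_mult summable_Suc_iff[THEN iffD2] summable_geometric) auto
    have eq: "2 * exp (-2 * real (Suc n) * (1 / Suc k)\<^sup>2 / (2*c)\<^sup>2) = 2 * q ^ Suc n" for n
    proof -
      have "-2 * real (Suc n) * (1 / Suc k)\<^sup>2 / (2*c)\<^sup>2 = real (Suc n) * (-2 * (1 / Suc k)\<^sup>2 / (2*c)\<^sup>2)"
        by (metis (no_types) mult.commute mult.left_commute times_divide_eq_right)
      then show ?thesis unfolding q_def by (simp only: exp_of_nat_mult)
    qed
    show "summable (\<lambda>n. measure M (A (1 / Suc k) n))"
    proof (rule summable_comparison_test'[OF sg])
      fix n :: nat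
      have "measure M (A (1 / Suc k) n) \<le> 2 * q ^ Suc n"
        using bnd[of "1 / Suc k" n] eq[of n] by simp
      then show "norm (measure M (A (1 / Suc k) n)) \<le> 2 * q ^ Suc n" by simp
    qed
  qed
  have "AE \<omega> in M. \<forall>k. eventually (\<lambda>n. \<omega> \<in> space M - A (1 / Suc k) n) sequentially"
    using ev by (simp add: AE_all_countable)
  then show ?thesis using AE_space
  proof (eventually_elim)
    case (elim \<omega>)
    have "(\<lambda>n. (\<Sum>i<Suc n. u (X i \<omega>)) / Suc n) \<longlonglongrightarrow> (\<integral>x. u x \<partial>P)"
    proof (rule LIMSEQ_I)
      fix r :: real assume "r > 0"
      then obtain k where k: "1 / Suc k < r" using nat_approx_posE by blast
      from elim(1)[rule_format, of k] obtain N where N: "\<And>n. n \<ge> N \<Longrightarrow> \<omega> \<notin> A (1 / Suc k) n"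
        by (auto simp: eventually_sequentially)
      show "\<exists>N. \<forall>n\<ge>N. norm ((\<Sum>i<Suc n. u (X i \<omega>)) / Suc n - (\<integral>x. u x \<partial>P)) < r"
      proof (intro exI allI impI)
        fix n assume "n \<ge> N"
        from N[OF this] have "\<omega> \<notin> A (1 / Suc k) n" .
        then have "\<not> (1 / Suc k \<le> \<bar>(\<Sum>i\<in>{..<Suc n}. Y i \<omega>) / real (card {..<Suc n}) - expectation (Y 0)\<bar>)"
          using elim(2) unfolding A_def by blast
        then have "\<bar>(\<Sum>i<Suc n. u (X i \<omega>)) / Suc n - (\<integral>x. u x \<partial>P)\<bar> < 1 / Suc k"
          using EY by (simp add: Y_def)
        then show "norm ((\<Sum>i<Suc n. u (X i \<omega>)) / Suc n - (\<integral>x. u x \<partial>P)) < r"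
          using k by simp
      qed
    qed
    then show ?case by (rule LIMSEQ_imp_Suc[where f="\<lambda>n. (\<Sum>i<n. u (X i \<omega>)) / real n"])
  qed
qed



definition cell :: "(nat \<Rightarrow> 'a::metric_space) \<Rightarrow> real \<Rightarrow> nat \<Rightarrow> 'a set" where
  "cell q r j = ball (q j) r - (\<Union>i<j. ball (q i) r)"

lemma cell_sub: "cell q r j \<subseteq> ball (q j) r"
  unfolding cell_def by auto

lemma cell_unique: "x \<in> cell q r i \<Longrightarrow> x \<in> cell q r j \<Longrightarrow> i = j"
  unfolding cell_def by (auto simp: lessThan_def) (meson linorder_neqE_nat)

lemma cell_cover:
  assumes "\<exists>j. dist (q j) x < r"
  shows "\<exists>j. x \<in> cell q r j"
proof -
  define j where "j = (LEAST j. dist (q j) x < r)"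
  have "dist (q j) x < r" unfolding j_def by (rule LeastI_ex) (rule assms)
  moreover have "\<not> dist (q i) x < r" if "i < j" for i
    using not_less_Least[OF that[unfolded j_def]] .
  ultimately show ?thesis unfolding cell_def by (intro exI[of _ j]) (auto simp: dist_commute)
qed

lemma cell_borel[measurable]: "cell q r j \<in> sets borel"
  unfolding cell_def by (intro sets.Diff sets.countable_UN' borel_open) auto

lemma unif_from_cells:
  fixes P :: "'a::euclidean_space measure" and h f :: "'a \<Rightarrow> real" and p q :: "nat \<Rightarrow> 'a"
  assumes fin: "finite_measure P" and sP: "sets P = sets borel"
    and hm[measurable]: "h \<in> borel_measurable borel" and h0: "\<And>x. 0 \<le> h x" and hH: "\<And>x. h x \<le> H"
    and dense: "\<And>x r. r > 0 \<Longrightarrow> \<exists>j. dist (q j) x < r"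
    and conv_cell: "\<And>m j. (\<lambda>n. (\<Sum>i<n. indicator (cell q (1 / Suc m) j) (p i) * h (p i)) / n)
        \<longlonglongrightarrow> (\<integral>x. indicator (cell q (1 / Suc m) j) x * h x \<partial>P)"
    and conv_one: "(\<lambda>n. (\<Sum>i<n. h (p i)) / n) \<longlonglongrightarrow> (\<integral>x. h x \<partial>P)"
    and fc: "continuous_on UNIV f" and fb: "bounded (range f)"
  shows "(\<lambda>n. (\<Sum>i<n. f (p i) * h (p i)) / n) \<longlonglongrightarrow> (\<integral>x. f x * h x \<partial>P)"
proof -
  interpret finite_measure P by fact
  have [measurable_cong]: "sets P = sets borel" by (rule sP)
  have fm[measurable]: "f \<in> borel_measurable borel" by (rule borel_measurable_continuous_onI[OF fc])
  obtain M where M: "\<And>x. \<bar>f x\<bar> \<le> M" and M0: "M \<ge> 0"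
  proof -
    from fb obtain a where "\<forall>y\<in>range f. norm y \<le> a" by (auto simp: bounded_iff)
    then have "\<bar>f x\<bar> \<le> max a 0" for x by (metis max.coboundedI1 rangeI real_norm_def)
    then show ?thesis using that[of "max a 0"] by simp
  qed
  have intg: "integrable P g" if [measurable]: "g \<in> borel_measurable borel" and gb: "\<And>x. \<bar>g x\<bar> \<le> B" for g and B :: real
    by (rule integrable_const_bound[where B=B]) (auto simp: gb)
  have hint: "integrable P h" by (rule intg[where B=H]) (use h0 hH in \<open>auto simp: abs_le_iff intro: order_trans[OF _ h0]\<close>)
  have H0: "0 \<le> H" using h0[of 0] hH[of 0] by linarith
  define S where "S g n = (\<Sum>i<n. g (p i) * h (p i)) / real n" for g :: "'a \<Rightarrow> real" and n
  define \<nu> where "\<nu> B = (\<integral>x. indicator B x * h x \<partial>P)" for B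
  define T where "T = (\<integral>x. h x \<partial>P)"
  have T0: "T \<ge> 0" unfolding T_def using h0 by simp
  have S1: "(\<lambda>n. S (\<lambda>_. 1) n) \<longlonglongrightarrow> T" using conv_one unfolding S_def T_def by simp
  have Scell: "(\<lambda>n. S (indicator (cell q (1 / Suc m) j)) n) \<longlonglongrightarrow> \<nu> (cell q (1 / Suc m) j)" for m j
    using conv_cell unfolding S_def \<nu>_def by simp
  show ?thesis
  proof (rule LIMSEQ_I)
    fix r :: real assume r: "r > 0"
    define K where "K = 2 * T + 2 * M + 1"
    have K: "K > 0" unfolding K_def using T0 M0 by simp
    define \<epsilon> where "\<epsilon> = r / K"
    have \<epsilon>: "\<epsilon> > 0" unfolding \<epsilon>_def using r K by simp
    define c where "c m = cell q (1 / Suc m)" for m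
    have cm[measurable]: "c m j \<in> sets borel" for m j unfolding c_def by measurable
    have cov: "\<exists>j. x \<in> c m j" for m x unfolding c_def by (rule cell_cover) (rule dense, simp)
    have cu: "x \<in> c m i \<Longrightarrow> x \<in> c m j \<Longrightarrow> i = j" for x m i j unfolding c_def by (rule cell_unique)
    have cb: "x \<in> c m j \<Longrightarrow> dist (q j) x < 1 / Suc m" for x m j
      using cell_sub[of q "1 / Suc m" j] unfolding c_def by auto
    define good where "good m j \<longleftrightarrow> (\<forall>y\<in>ball (q j) (1 / Suc m). \<bar>f y - f (q j)\<bar> \<le> \<epsilon>)" for m j
    define bad where "bad m = (\<Union>j\<in>{j. \<not> good m j}. c m j)" for m
    have badm[measurable]: "bad m \<in> sets borel" for m unfolding bad_def by measurable
    have ev_good: "eventually (\<lambda>m. x \<notin> bad m) sequentially" for x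
    proof -
      have "isCont f x" using fc by (simp add: continuous_on_eq_continuous_at)
      then obtain \<delta> where \<delta>: "\<delta> > 0" and d: "\<And>y. dist y x < \<delta> \<Longrightarrow> dist (f y) (f x) < \<epsilon> / 2"
        using \<epsilon> unfolding continuous_at_eps_delta by (metis half_gt_zero)
      obtain N :: nat where N: "2 / Suc N < \<delta>"
      proof -
        obtain N :: nat where "1 / Suc N < \<delta> / 2" using \<delta> by (rule_tac nat_approx_posE[of "\<delta> / 2"]) auto
        then show ?thesis using that[of N] by simp
      qed
      show ?thesis unfolding eventually_sequentially
      proof (intro exI allI impI)
        fix m assume "N \<le> m"
        then have mN: "2 / Suc m \<le> 2 / Suc N" by (simp add: frac_le)
        obtain j where j: "x \<in> c m j" using cov by blast
        have dj: "dist (q j) x < 1 / Suc m" using cb[OF j] .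
        have "good m j" unfolding good_def
        proof
          fix y assume "y \<in> ball (q j) (1 / Suc m)"
          then have "dist (q j) y < 1 / Suc m" by simp
          then have "dist y x < 2 / Suc m" using dj dist_triangle[of y x "q j"]
            by (simp add: dist_commute)
          then have "dist (f y) (f x) < \<epsilon> / 2" using d mN N by simp
          moreover have "dist (f (q j)) (f x) < \<epsilon> / 2"
          proof -
            have "1 / real (Suc m) \<le> 2 / Suc m" by (simp add: divide_right_mono)
            then show ?thesis using d[of "q j"] dj mN N by simp
          qed
          ultimately show "\<bar>f y - f (q j)\<bar> \<le> \<epsilon>" unfolding dist_real_def by linarith
        qed
        then show "x \<notin> bad m" unfolding bad_def using j cu by blast
      qed
    qed
    have ih: "integrable P (\<lambda>x. indicator B x * h x)" if [measurable]: "B \<in> sets borel" for B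
      by (rule intg[where B=H]) (use h0 hH H0 in \<open>auto simp: indicator_def abs_le_iff intro: order_trans[OF _ h0]\<close>)
    have "(\<lambda>m. \<nu> (bad m)) \<longlonglongrightarrow> (\<integral>x. 0 \<partial>P)"
      unfolding \<nu>_def
    proof (rule integral_dominated_convergence[where w=h])
      show "AE x in P. (\<lambda>m. indicator (bad m) x * h x) \<longlonglongrightarrow> 0"
      proof (rule AE_I2)
        fix x show "(\<lambda>m. indicator (bad m) x * h x) \<longlonglongrightarrow> 0"
          by (rule tendsto_eventually) (use ev_good[of x] in \<open>auto elim: eventually_mono\<close>)
      qed
      show "AE x in P. norm (indicator (bad m) x * h x) \<le> h x" for m
        using h0 by (intro AE_I2) (auto simp: indicator_def)
    qed (auto intro: hint)
    then have "eventually (\<lambda>m. \<nu> (bad m) < \<epsilon>) sequentially"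
      using \<epsilon> by (intro order_tendstoD(2)) auto
    then obtain m where mbad: "\<nu> (bad m) < \<epsilon>" by (auto simp: eventually_sequentially)
    define R where "R J = UNIV - (\<Union>j\<in>{j. j < J \<and> good m j}. c m j)" for J
    have Rm[measurable]: "R J \<in> sets borel" for J unfolding R_def by measurable
    have "(\<lambda>J. \<nu> (R J)) \<longlonglongrightarrow> \<nu> (bad m)"
      unfolding \<nu>_def
    proof (rule integral_dominated_convergence[where w=h])
      show "AE x in P. (\<lambda>J. indicator (R J) x * h x) \<longlonglongrightarrow> indicator (bad m) x * h x"
      proof (rule AE_I2)
        fix x
        obtain j0 where j0: "x \<in> c m j0" using cov by blast
        show "(\<lambda>J. indicator (R J) x * h x) \<longlonglongrightarrow> indicator (bad m) x * h x"
        proof (rule tendsto_eventually)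
          show "eventually (\<lambda>J. indicator (R J) x * h x = indicator (bad m) x * h x) sequentially"
          proof (cases "good m j0")
            case True
            then have "x \<notin> bad m" unfolding bad_def using j0 cu by blast
            moreover have "x \<notin> R J" if "J > j0" for J unfolding R_def using j0 True that by blast
            ultimately show ?thesis unfolding eventually_sequentially
              by (intro exI[of _ "Suc j0"]) auto
          next
            case False
            then have "x \<in> bad m" unfolding bad_def using j0 by blast
            moreover have "x \<in> R J" for J unfolding R_def using j0 False cu by blast
            ultimately show ?thesis by auto
          qed
        qed
      qed
      show "AE x in P. norm (indicator (R J) x * h x) \<le> h x" for J
        using h0 by (intro AE_I2) (auto simp: indicator_def)
    qed (auto intro: hint)
    then have "eventually (\<lambda>J. \<nu> (R J) < \<epsilon>) sequentially"
      using mbad by (intro order_tendstoD(2)) auto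
    then obtain J where RJ: "\<nu> (R J) < \<epsilon>" by (auto simp: eventually_sequentially)
    define G where "G = {j. j < J \<and> good m j}"
    have finG: "finite G" unfolding G_def by simp
    define \<phi> where "\<phi> x = (\<Sum>j\<in>G. f (q j) * indicator (c m j) x)" for x
    have pcase: "(\<exists>j\<in>G. x \<in> c m j \<and> \<phi> x = f (q j) \<and> (\<Sum>j\<in>G. indicator (c m j) x) = (1::real) \<and> x \<notin> R J)
        \<or> (\<phi> x = 0 \<and> (\<Sum>j\<in>G. indicator (c m j) x) = (0::real) \<and> x \<in> R J)" for x
    proof (cases "\<exists>j\<in>G. x \<in> c m j")
      case True
      then obtain j where j: "j \<in> G" "x \<in> c m j" by blast
      have z: "indicator (c m j') x = (0::real)" if "j' \<in> G - {j}" for j'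
        using that j cu[of x m j' j] by (auto simp: indicator_def)
      have "\<phi> x = f (q j) * indicator (c m j) x + (\<Sum>j'\<in>G - {j}. f (q j') * indicator (c m j') x)"
        unfolding \<phi>_def using finG j(1) by (rule sum.remove)
      also have "\<dots> = f (q j)" using z j(2) by simp
      finally have 1: "\<phi> x = f (q j)" .
      have "(\<Sum>j\<in>G. indicator (c m j) x) = indicator (c m j) x + (\<Sum>j'\<in>G - {j}. indicator (c m j') x :: real)"
        using finG j(1) by (rule sum.remove)
      also have "\<dots> = 1" using z j(2) by simp
      finally have 2: "(\<Sum>j\<in>G. indicator (c m j) x) = (1::real)" .
      have "x \<notin> R J" unfolding R_def using j unfolding G_def by blast
      then show ?thesis using 1 2 j by blast
    next
      case False
      then have "\<phi> x = 0" "(\<Sum>j\<in>G. indicator (c m j) x) = (0::real)" unfolding \<phi>_def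
        by (auto intro!: sum.neutral simp: indicator_def)
      moreover have "x \<in> R J" unfolding R_def using False unfolding G_def by blast
      ultimately show ?thesis by blast
    qed
    have E1: "\<bar>f x - \<phi> x\<bar> \<le> \<epsilon> + M * indicator (R J) x" for x
      using pcase[of x]
    proof
      assume "\<exists>j\<in>G. x \<in> c m j \<and> \<phi> x = f (q j) \<and> (\<Sum>j\<in>G. indicator (c m j) x) = (1::real) \<and> x \<notin> R J"
      then obtain j where j: "j \<in> G" "x \<in> c m j" "\<phi> x = f (q j)" "x \<notin> R J" by blast
      then have "good m j" unfolding G_def by simp
      moreover have "x \<in> ball (q j) (1 / Suc m)" using cb[OF j(2)] by simp
      ultimately have "\<bar>f x - f (q j)\<bar> \<le> \<epsilon>" unfolding good_def by blast
      then show ?thesis using j by simp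
    next
      assume "\<phi> x = 0 \<and> (\<Sum>j\<in>G. indicator (c m j) x) = (0::real) \<and> x \<in> R J"
      then show ?thesis using M[of x] \<epsilon> by simp
    qed
    have E2: "indicator (R J) x = 1 - (\<Sum>j\<in>G. indicator (c m j) x :: real)" for x
      using pcase[of x] by auto
    have cint: "integrable P (\<lambda>x. indicator (c m j) x * h x)" for j by (rule ih) simp
    have Sphi: "S \<phi> n = (\<Sum>j\<in>G. f (q j) * S (indicator (c m j)) n)" for n
    proof -
      have "S \<phi> n = (\<Sum>i<n. \<Sum>j\<in>G. f (q j) * (indicator (c m j) (p i) * h (p i))) / n"
        by (simp only: S_def \<phi>_def sum_distrib_right mult.assoc)
      also have "\<dots> = (\<Sum>j\<in>G. \<Sum>i<n. f (q j) * (indicator (c m j) (p i) * h (p i))) / n"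
        by (subst sum.swap) (rule refl)
      also have "\<dots> = (\<Sum>j\<in>G. f (q j) * ((\<Sum>i<n. indicator (c m j) (p i) * h (p i)) / n))"
        by (subst sum_divide_distrib, rule sum.cong, rule refl, simp only: sum_distrib_left[symmetric] times_divide_eq_right)
      finally show ?thesis unfolding S_def .
    qed
    have SR: "S (indicator (R J)) n = S (\<lambda>_. 1) n - (\<Sum>j\<in>G. S (indicator (c m j)) n)" for n
    proof -
      have "S (indicator (R J)) n = (\<Sum>i<n. h (p i) - (\<Sum>j\<in>G. indicator (c m j) (p i) * h (p i))) / n"
        by (simp only: S_def E2 left_diff_distrib sum_distrib_right mult_1)
      also have "\<dots> = ((\<Sum>i<n. h (p i)) - (\<Sum>i<n. \<Sum>j\<in>G. indicator (c m j) (p i) * h (p i))) / n"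
        by (simp only: sum_subtractf)
      also have "\<dots> = ((\<Sum>i<n. h (p i)) - (\<Sum>j\<in>G. \<Sum>i<n. indicator (c m j) (p i) * h (p i))) / n"
        by (subst sum.swap) (rule refl)
      also have "\<dots> = S (\<lambda>_. 1) n - (\<Sum>j\<in>G. S (indicator (c m j)) n)"
        by (simp only: S_def diff_divide_distrib sum_divide_distrib mult_1)
      finally show ?thesis .
    qed
    define I\<phi> where "I\<phi> = (\<Sum>j\<in>G. f (q j) * \<nu> (c m j))"
    have Iphi: "(\<integral>x. \<phi> x * h x \<partial>P) = I\<phi>"
    proof -
      have "(\<integral>x. \<phi> x * h x \<partial>P) = (\<integral>x. (\<Sum>j\<in>G. f (q j) * (indicator (c m j) x * h x)) \<partial>P)"
        unfolding \<phi>_def by (simp add: sum_distrib_right mult.assoc)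
      also have "\<dots> = (\<Sum>j\<in>G. (\<integral>x. f (q j) * (indicator (c m j) x * h x) \<partial>P))"
        by (rule Bochner_Integration.integral_sum) (use cint in auto)
      also have "\<dots> = I\<phi>" unfolding I\<phi>_def \<nu>_def by simp
      finally show ?thesis .
    qed
    have IR: "\<nu> (R J) = T - (\<Sum>j\<in>G. \<nu> (c m j))"
    proof -
      have "\<nu> (R J) = (\<integral>x. h x - (\<Sum>j\<in>G. indicator (c m j) x * h x) \<partial>P)"
        unfolding \<nu>_def E2 by (simp add: left_diff_distrib sum_distrib_right)
      also have "\<dots> = T - (\<Sum>j\<in>G. \<nu> (c m j))"
        unfolding T_def \<nu>_def
        by (subst Bochner_Integration.integral_diff) (use hint cint in \<open>auto simp: Bochner_Integration.integral_sum\<close>)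
      finally show ?thesis .
    qed
    have lim_phi: "(\<lambda>n. S \<phi> n) \<longlonglongrightarrow> I\<phi>"
      unfolding Sphi I\<phi>_def c_def by (intro tendsto_sum tendsto_mult_left Scell)
    have lim_R: "(\<lambda>n. S (indicator (R J)) n) \<longlonglongrightarrow> \<nu> (R J)"
      unfolding SR IR c_def by (intro tendsto_diff S1 tendsto_sum Scell)
    have Ediff: "\<bar>S f n - S \<phi> n\<bar> \<le> \<epsilon> * S (\<lambda>_. 1) n + M * S (indicator (R J)) n" for n
    proof -
      have "\<bar>\<Sum>i<n. (f (p i) - \<phi> (p i)) * h (p i)\<bar> \<le> (\<Sum>i<n. \<bar>(f (p i) - \<phi> (p i)) * h (p i)\<bar>)"
        by (rule sum_abs)
      also have "\<dots> \<le> (\<Sum>i<n. (\<epsilon> + M * indicator (R J) (p i)) * h (p i))"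
        by (intro sum_mono) (simp add: abs_mult h0 mult_right_mono E1)
      finally have *: "\<bar>\<Sum>i<n. (f (p i) - \<phi> (p i)) * h (p i)\<bar> \<le> (\<Sum>i<n. (\<epsilon> + M * indicator (R J) (p i)) * h (p i))" .
      have "\<bar>S f n - S \<phi> n\<bar> = \<bar>\<Sum>i<n. (f (p i) - \<phi> (p i)) * h (p i)\<bar> / real n"
        unfolding S_def by (simp add: diff_divide_distrib[symmetric] left_diff_distrib sum_subtractf)
      also have "\<dots> \<le> (\<Sum>i<n. (\<epsilon> + M * indicator (R J) (p i)) * h (p i)) / real n"
        using * by (rule divide_right_mono) simp
      also have "\<dots> = \<epsilon> * S (\<lambda>_. 1) n + M * S (indicator (R J)) n"
        unfolding S_def by (simp only: distrib_right sum.distrib mult.assoc sum_distrib_left[symmetric] add_divide_distrib times_divide_eq_right mult_1)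
      finally show ?thesis .
    qed
    have Iint: "\<bar>(\<integral>x. f x * h x \<partial>P) - I\<phi>\<bar> \<le> \<epsilon> * T + M * \<nu> (R J)"
    proof -
      have phim[measurable]: "\<phi> \<in> borel_measurable borel" unfolding \<phi>_def by measurable
      have i1: "integrable P (\<lambda>x. f x * h x)" 
      proof (rule intg[where B="M * H"])
        show "\<bar>f x * h x\<bar> \<le> M * H" for x
          unfolding abs_mult by (rule mult_mono) (use M hH h0 M0 in auto)
      qed measurable
      have i2: "integrable P (\<lambda>x. \<phi> x * h x)"
        by (rule intg[where B="(\<Sum>j\<in>G. \<bar>f (q j)\<bar>) * H"])
          (auto simp: abs_mult \<phi>_def h0 hH intro!: mult_mono order_trans[OF sum_abs] sum_mono simp: indicator_def)
      have iR: "integrable P (\<lambda>x. indicator (R J) x * h x)" by (rule ih) simp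
      have "\<bar>(\<integral>x. f x * h x \<partial>P) - I\<phi>\<bar> = \<bar>\<integral>x. (f x - \<phi> x) * h x \<partial>P\<bar>"
        unfolding Iphi[symmetric] left_diff_distrib using i1 i2 by simp
      also have "\<dots> \<le> (\<integral>x. \<bar>(f x - \<phi> x) * h x\<bar> \<partial>P)" by (rule integral_abs_bound)
      also have "\<dots> \<le> (\<integral>x. \<epsilon> * h x + M * (indicator (R J) x * h x) \<partial>P)"
      proof (rule integral_mono)
        have i3: "integrable P (\<lambda>x. (f x - \<phi> x) * h x)" using i1 i2 by (simp add: left_diff_distrib)
        show "integrable P (\<lambda>x. \<bar>(f x - \<phi> x) * h x\<bar>)" using i3 by (rule integrable_abs)
        show "integrable P (\<lambda>x. \<epsilon> * h x + M * (indicator (R J) x * h x))" using hint iR by auto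
        show "\<bar>(f x - \<phi> x) * h x\<bar> \<le> \<epsilon> * h x + M * (indicator (R J) x * h x)" for x
        proof -
          have "\<bar>(f x - \<phi> x) * h x\<bar> = \<bar>f x - \<phi> x\<bar> * h x" using h0[of x] by (simp add: abs_mult)
          also have "\<dots> \<le> (\<epsilon> + M * indicator (R J) x) * h x" by (rule mult_right_mono[OF E1 h0])
          finally show ?thesis by (simp add: algebra_simps)
        qed
      qed
      also have "\<dots> = \<epsilon> * T + M * \<nu> (R J)" unfolding T_def \<nu>_def using hint iR by simp
      finally show ?thesis .
    qed
    define L where "L = (\<epsilon> * T + M * \<nu> (R J)) + (\<epsilon> * T + M * \<nu> (R J))"
    have lim_b: "(\<lambda>n. \<bar>S \<phi> n - I\<phi>\<bar> + (\<epsilon> * S (\<lambda>_. 1) n + M * S (indicator (R J)) n) + (\<epsilon> * T + M * \<nu> (R J)))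
        \<longlonglongrightarrow> L"
    proof -
      have "(\<lambda>n. \<bar>S \<phi> n - I\<phi>\<bar>) \<longlonglongrightarrow> 0" using tendsto_rabs[OF LIM_zero[OF lim_phi]] by simp
      then have "(\<lambda>n. \<bar>S \<phi> n - I\<phi>\<bar> + (\<epsilon> * S (\<lambda>_. 1) n + M * S (indicator (R J)) n) + (\<epsilon> * T + M * \<nu> (R J)))
        \<longlonglongrightarrow> 0 + (\<epsilon> * T + M * \<nu> (R J)) + (\<epsilon> * T + M * \<nu> (R J))"
        by (intro tendsto_add tendsto_mult_left S1 lim_R tendsto_const)
      then show ?thesis unfolding L_def by simp
    qed
    have "L + \<epsilon> \<le> r"
    proof -
      have "M * \<nu> (R J) \<le> M * \<epsilon>" using RJ M0 by (simp add: mult_left_mono)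
      then have "L + \<epsilon> \<le> \<epsilon> * K" unfolding L_def K_def by (simp add: algebra_simps)
      also have "\<epsilon> * K = r" unfolding \<epsilon>_def using K by simp
      finally show ?thesis .
    qed
    moreover have "eventually (\<lambda>n. \<bar>S \<phi> n - I\<phi>\<bar> + (\<epsilon> * S (\<lambda>_. 1) n + M * S (indicator (R J)) n) + (\<epsilon> * T + M * \<nu> (R J)) < L + \<epsilon>) sequentially"
      using lim_b \<epsilon> by (intro order_tendstoD(2)) auto
    then obtain no where no: "\<And>n. n \<ge> no \<Longrightarrow> \<bar>S \<phi> n - I\<phi>\<bar> + (\<epsilon> * S (\<lambda>_. 1) n + M * S (indicator (R J)) n) + (\<epsilon> * T + M * \<nu> (R J)) < L + \<epsilon>"
      by (auto simp: eventually_sequentially)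
    show "\<exists>no. \<forall>n\<ge>no. norm ((\<Sum>i<n. f (p i) * h (p i)) / real n - (\<integral>x. f x * h x \<partial>P)) < r"
    proof (intro exI allI impI)
      fix n assume "n \<ge> no"
      have "\<bar>S f n - (\<integral>x. f x * h x \<partial>P)\<bar> \<le> \<bar>S f n - S \<phi> n\<bar> + \<bar>S \<phi> n - I\<phi>\<bar> + \<bar>(\<integral>x. f x * h x \<partial>P) - I\<phi>\<bar>"
        by linarith
      also have "\<dots> < L + \<epsilon>" using no[OF \<open>n \<ge> no\<close>] Ediff[of n] Iint by linarith
      finally show "norm ((\<Sum>i<n. f (p i) * h (p i)) / real n - (\<integral>x. f x * h x \<partial>P)) < r"
        using \<open>L + \<epsilon> \<le> r\<close> unfolding S_def by simp
    qed
  qed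
qed



lemma unif_slln:
  fixes M :: "'w measure" and X :: "nat \<Rightarrow> 'w \<Rightarrow> 'a::euclidean_space" and h :: "'a \<Rightarrow> real"
  assumes M: "prob_space M"
    and ind: "prob_space.indep_vars M (\<lambda>_. borel) X UNIV"
    and Xm: "\<And>i. X i \<in> borel_measurable M"
    and XP: "\<And>i. distr M borel (X i) = P"
    and PP: "P \<in> prob_measures"
    and hm[measurable]: "h \<in> borel_measurable borel" and h0: "\<And>x. 0 \<le> h x" and hH: "\<And>x. h x \<le> H"
  shows "AE \<omega> in M. \<forall>f. continuous_on UNIV f \<and> bounded (range f) \<longrightarrow>
           (\<lambda>n. (\<Sum>i<n. f (X i \<omega>) * h (X i \<omega>)) / n) \<longlonglongrightarrow> (\<integral>x. f x * h x \<partial>P)"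
proof -
  have sP: "sets P = sets borel" and Pp: "prob_space P" using PP unfolding prob_measures_def by auto
  have fin: "finite_measure P" using Pp by (rule prob_space.axioms(1))
  have H0: "0 \<le> H" using h0[of 0] hH[of 0] by linarith
  from countable_dense_setE obtain D :: "'a set"
    where D: "countable D" "\<And>U :: 'a set. open U \<Longrightarrow> U \<noteq> {} \<Longrightarrow> \<exists>d\<in>D. d \<in> U"
    by auto
  have Dne: "D \<noteq> {}" using D(2)[of UNIV] by auto
  define q where "q = from_nat_into D"
  have dense: "\<exists>j. dist (q j) x < r" if r: "r > 0" for x r
  proof -
    obtain d where d: "d \<in> D" "d \<in> ball x r" using D(2)[of "ball x r"] r by auto
    then obtain j where "q j = d" unfolding q_def using D(1) by (metis from_nat_into_surj)
    then show ?thesis using d by (auto simp: dist_commute)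
  qed
  have cellu: "AE \<omega> in M. (\<lambda>n. (\<Sum>i<n. indicator (cell q (1 / Suc m) j) (X i \<omega>) * h (X i \<omega>)) / n)
        \<longlonglongrightarrow> (\<integral>x. indicator (cell q (1 / Suc m) j) x * h x \<partial>P)" for m j
    by (rule slln_bounded[OF M ind Xm XP, where K=H]) (auto simp: indicator_def abs_le_iff h0 hH H0 intro: order_trans[OF _ h0])
  have one: "AE \<omega> in M. (\<lambda>n. (\<Sum>i<n. h (X i \<omega>)) / n) \<longlonglongrightarrow> (\<integral>x. h x \<partial>P)"
    by (rule slln_bounded[OF M ind Xm XP, where K=H]) (auto simp: abs_le_iff h0 hH intro: order_trans[OF _ h0])
  have "AE \<omega> in M. \<forall>m j. (\<lambda>n. (\<Sum>i<n. indicator (cell q (1 / Suc m) j) (X i \<omega>) * h (X i \<omega>)) / n)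
        \<longlonglongrightarrow> (\<integral>x. indicator (cell q (1 / Suc m) j) x * h x \<partial>P)"
    using cellu by (simp add: AE_all_countable)
  with one show ?thesis
  proof (eventually_elim)
    case (elim \<omega>)
    show ?case
    proof (intro allI impI)
      fix f :: "'a \<Rightarrow> real" assume a: "continuous_on UNIV f \<and> bounded (range f)"
      show "(\<lambda>n. (\<Sum>i<n. f (X i \<omega>) * h (X i \<omega>)) / n) \<longlonglongrightarrow> (\<integral>x. f x * h x \<partial>P)"
        by (rule unif_from_cells[OF fin sP hm h0 hH dense, where p="\<lambda>i. X i \<omega>"]) (use elim a in blast)+
    qed
  qed
qed



lemma trim_density:
  fixes P Q :: "'a::euclidean_space measure" and \<alpha> :: real
  assumes PP: "P \<in> prob_measures" and a0: "0 < \<alpha>" and a1: "\<alpha> \<le> 1" and QT: "Q \<in> trimming P \<alpha>"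
  obtains g where "g \<in> borel_measurable borel" "\<And>x. 0 \<le> g x" "\<And>x. g x \<le> 1 / \<alpha>"
    "Q = density P (\<lambda>x. ennreal (g x))" "\<alpha> = 1 \<longrightarrow> (\<forall>x. g x = 1)"
proof -
  have sP: "sets P = sets borel" and Pp: "prob_space P" using PP unfolding prob_measures_def by auto
  have sQ: "sets Q = sets borel" and Qp: "prob_space Q" and Qle: "\<And>B. B \<in> sets borel \<Longrightarrow> measure Q B \<le> measure P B / \<alpha>"
    using QT unfolding trimming_def prob_measures_def by auto
  interpret P: prob_space P by fact
  interpret Q: prob_space Q by fact
  show ?thesis
  proof (cases "\<alpha> = 1")
    case True
    have "Q = P"
    proof (rule measure_eqI)
      show "sets Q = sets P" using sQ sP by simp
      fix A assume A: "A \<in> sets Q"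
      then have Ab: "A \<in> sets borel" using sQ by simp
      have Ac: "space P - A \<in> sets borel" using Ab sP by (metis sets.compl_sets)
      have spQ: "space Q = space P" using sQ sP by (metis sets_eq_imp_space_eq)
      have "measure Q A \<le> measure P A" using Qle[OF Ab] True by simp
      moreover have "measure Q (space P - A) \<le> measure P (space P - A)" using Qle[OF Ac] True by simp
      moreover have "measure Q (space P - A) = 1 - measure Q A"
        using Q.prob_compl[of A] A spQ by simp
      moreover have "measure P (space P - A) = 1 - measure P A"
        using P.prob_compl[of A] Ab sP by simp
      ultimately have "measure Q A = measure P A" by simp
      then show "emeasure Q A = emeasure P A"
        by (simp add: Q.emeasure_eq_measure P.emeasure_eq_measure)
    qed
    then show ?thesis using that[of "\<lambda>_. 1"] True by (simp add: density_1)
  next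
    case False
    have ac: "absolutely_continuous P Q"
      unfolding absolutely_continuous_def
    proof
      fix A assume "A \<in> null_sets P"
      then have A: "A \<in> sets borel" "measure P A = 0" using sP by (auto simp: null_sets_def P.emeasure_eq_measure)
      then have "measure Q A \<le> 0" using Qle[OF A(1)] by simp
      then have "measure Q A = 0" by (simp add: antisym)
      then show "A \<in> null_sets Q" using A sQ by (auto simp: null_sets_def Q.emeasure_eq_measure)
    qed
    have sQP: "sets Q = sets P" using sQ sP by simp
    from P.Radon_Nikodym[OF ac sQP] obtain f where fm: "f \<in> borel_measurable P" and fQ: "density P f = Q"
      by blast
    have fmb[measurable]: "f \<in> borel_measurable borel" using fm by (simp only: measurable_cong_sets[OF sP refl])
    have bk: "AE x in P. f x < ennreal (1 / \<alpha> + 1 / Suc k)" for k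
    proof -
      define c where "c = 1 / \<alpha> + 1 / Suc k"
      define B where "B = {x \<in> space P. ennreal c \<le> f x}"
      have "f -` {ennreal c..} \<inter> space P \<in> sets P" by (rule measurable_sets[OF fm]) simp
      moreover have "B = f -` {ennreal c..} \<inter> space P" unfolding B_def by auto
      ultimately have Bm: "B \<in> sets P" by simp
      have Bb: "B \<in> sets borel" using Bm sP by simp
      have "ennreal c * emeasure P B = (\<integral>\<^sup>+x. ennreal c * indicator B x \<partial>P)"
        using Bm by (simp add: nn_integral_cmult_indicator)
      also have "\<dots> \<le> (\<integral>\<^sup>+x. f x * indicator B x \<partial>P)"
        by (rule nn_integral_mono) (auto simp: B_def indicator_def)
      also have "\<dots> = emeasure Q B" unfolding fQ[symmetric] by (rule emeasure_density[OF fm Bm, symmetric])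
      finally have "ennreal (c * measure P B) \<le> ennreal (measure Q B)"
        using a0 by (simp add: P.emeasure_eq_measure Q.emeasure_eq_measure ennreal_mult c_def)
      then have "c * measure P B \<le> measure Q B" by (simp add: ennreal_le_iff)
      also have "\<dots> \<le> measure P B / \<alpha>" by (rule Qle[OF Bb])
      finally have "(1 / Suc k) * measure P B \<le> 0" unfolding c_def by (simp add: field_simps)
      then have "measure P B \<le> 0" by (simp add: divide_le_0_iff)
      then have "measure P B = 0" using measure_nonneg[of P B] by linarith
      then have "B \<in> null_sets P" using Bm by (simp add: null_sets_def P.emeasure_eq_measure)
      then show ?thesis unfolding B_def c_def by (rule AE_I') (auto simp: not_less)
    qed
    have "AE x in P. \<forall>k. f x < ennreal (1 / \<alpha> + 1 / Suc k)" using bk by (simp add: AE_all_countable)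
    then have fle: "AE x in P. f x \<le> ennreal (1 / \<alpha>)"
    proof (eventually_elim)
      case (elim x)
      show ?case
      proof (rule ccontr)
        assume "\<not> f x \<le> ennreal (1 / \<alpha>)"
        then have gt: "ennreal (1 / \<alpha>) < f x" by simp
        show False
        proof (cases "f x = \<infinity>")
          case True then show False using elim[rule_format, of 0] by simp
        next
          case False
          then obtain t where t: "f x = ennreal t" "t \<ge> 0" by (cases "f x") auto
          then have "1 / \<alpha> < t" using gt a0 by (simp add: ennreal_less_iff)
          then have "t - 1 / \<alpha> > 0" by simp
          then obtain k :: nat where k: "1 / Suc k < t - 1 / \<alpha>" by (rule nat_approx_posE)
          have e: "ennreal t < ennreal (1 / \<alpha> + 1 / Suc k)" using elim[rule_format, of k] t(1) by (simp only:)
          have "t < 1 / \<alpha> + 1 / Suc k" using e unfolding ennreal_less_iff[OF t(2)] .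
          then show False using k by simp
        qed
      qed
    qed
    define g where "g x = min (enn2real (f x)) (1 / \<alpha>)" for x
    have gm[measurable]: "g \<in> borel_measurable borel" unfolding g_def by measurable
    have "density P f = density P (\<lambda>x. ennreal (g x))"
    proof (rule density_cong[OF fm])
      show "(\<lambda>x. ennreal (g x)) \<in> borel_measurable P" unfolding measurable_cong_sets[OF sP refl] by measurable
      show "AE x in P. f x = ennreal (g x)"
        using fle
      proof (eventually_elim)
        case (elim x)
        then have "f x \<noteq> \<infinity>" by (auto simp: top_unique)
        then have "f x = ennreal (enn2real (f x))" by (simp add: less_top)
        moreover have "enn2real (f x) \<le> 1 / \<alpha>" using elim a0 by (simp add: enn2real_leI)
        ultimately show ?case unfolding g_def by (simp add: min_def)
      qed
    qed
    then have "Q = density P (\<lambda>x. ennreal (g x))" using fQ by simp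
    moreover have "0 \<le> g x" for x unfolding g_def using a0 by simp
    moreover have "g x \<le> 1 / \<alpha>" for x unfolding g_def by simp
    ultimately show ?thesis using that[of g] gm False by blast
  qed
qed



definition pm :: "nat \<Rightarrow> (nat \<Rightarrow> real) \<Rightarrow> (nat \<Rightarrow> 'a::euclidean_space) \<Rightarrow> 'a measure" where
  "pm n w p = distr (density (count_space {..<n}) (\<lambda>i. ennreal (w i))) borel p"

lemma pm_sets[simp]: "sets (pm n w p) = sets borel"
  unfolding pm_def by simp

lemma pm_space[simp]: "space (pm n w p) = UNIV"
  unfolding pm_def by simp

lemma pm_emeasure:
  assumes B: "B \<in> sets borel" and w: "\<And>i. 0 \<le> w i"
  shows "emeasure (pm n w p) B = ennreal (\<Sum>i<n. w i * indicator B (p i))"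
proof -
  have "emeasure (pm n w p) B = emeasure (density (count_space {..<n}) (\<lambda>i. ennreal (w i))) (p -` B \<inter> {..<n})"
    unfolding pm_def using B by (subst emeasure_distr) auto
  also have "\<dots> = (\<integral>\<^sup>+i. ennreal (w i) * indicator (p -` B \<inter> {..<n}) i \<partial>count_space {..<n})"
    by (subst emeasure_density) auto
  also have "\<dots> = (\<Sum>i<n. ennreal (w i) * indicator (p -` B \<inter> {..<n}) i)"
    by (rule nn_integral_count_space_finite) simp
  also have "\<dots> = (\<Sum>i<n. ennreal (w i * indicator B (p i)))"
    by (rule sum.cong) (auto simp: indicator_def)
  also have "\<dots> = ennreal (\<Sum>i<n. w i * indicator B (p i))"
    using w by (subst sum_ennreal) auto
  finally show ?thesis .
qed

lemma pm_measure:
  assumes B: "B \<in> sets borel" and w: "\<And>i. 0 \<le> w i"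
  shows "measure (pm n w p) B = (\<Sum>i<n. w i * indicator B (p i))"
  unfolding measure_def pm_emeasure[OF assms] using w by (simp add: sum_nonneg)

lemma pm_prob:
  assumes w: "\<And>i. 0 \<le> w i" and s: "(\<Sum>i<n. w i) = 1"
  shows "prob_space (pm n w p)"
proof (rule prob_spaceI)
  show "emeasure (pm n w p) (space (pm n w p)) = 1"
    using pm_emeasure[of UNIV w n p] w s by simp
qed

lemma pm_integral:
  assumes w: "\<And>i. 0 \<le> w i" and f[measurable]: "f \<in> borel_measurable borel"
  shows "integral\<^sup>L (pm n w p) f = (\<Sum>i<n. w i * f (p i))"
proof -
  have "integral\<^sup>L (pm n w p) f = (\<integral>i. f (p i) \<partial>density (count_space {..<n}) (\<lambda>i. ennreal (w i)))"
    unfolding pm_def by (subst integral_distr) auto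
  also have "\<dots> = (\<integral>i. w i * f (p i) \<partial>count_space {..<n})"
    using w by (subst integral_density) auto
  also have "\<dots> = (\<Sum>i<n. w i * f (p i))"
    by (rule lebesgue_integral_count_space_finite) simp
  finally show ?thesis .
qed

lemma empirical_pm:
  fixes X :: "nat \<Rightarrow> 'w \<Rightarrow> 'a::euclidean_space"
  assumes n: "n \<ge> 1"
  shows "empirical X n \<omega> = pm n (\<lambda>_. 1 / n) (\<lambda>i. X i \<omega>)"
proof -
  have "empirical X n \<omega> = measure_of UNIV (sets borel) (emeasure (pm n (\<lambda>_. 1 / n) (\<lambda>i. X i \<omega>)))"
    unfolding empirical_def
  proof (rule measure_of_eq)
    show "sets borel \<subseteq> Pow UNIV" by simp
    fix B :: "'a set" assume "B \<in> sigma_sets UNIV (sets borel)"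
    then have B: "B \<in> sets borel" using sets.sigma_sets_eq[of borel] by (metis space_borel)
    have "card {i. i < n \<and> X i \<omega> \<in> B} = (\<Sum>i<n. indicator B (X i \<omega>) :: real)"
    proof -
      have "real (card {i \<in> {..<n}. X i \<omega> \<in> B}) = (\<Sum>i\<in>{i \<in> {..<n}. X i \<omega> \<in> B}. 1)"
        by (rule real_of_card)
      also have "\<dots> = (\<Sum>i<n. if X i \<omega> \<in> B then 1 else 0)" by (rule sum.inter_filter) simp
      also have "\<dots> = (\<Sum>i<n. indicator B (X i \<omega>))" by (rule sum.cong) (simp_all add: indicator_def)
      finally have r: "real (card {i \<in> {..<n}. X i \<omega> \<in> B}) = (\<Sum>i<n. indicator B (X i \<omega>))" .
      have eq: "{i. i < n \<and> X i \<omega> \<in> B} = {i \<in> {..<n}. X i \<omega> \<in> B}" by auto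
      show ?thesis unfolding eq by (rule r)
    qed
    then have "real (card {i. i < n \<and> X i \<omega> \<in> B}) / real n = (\<Sum>i<n. 1 / real n * indicator B (X i \<omega>))"
      by (simp add: sum_divide_distrib)
    then show "ennreal (real (card {i. i < n \<and> X i \<omega> \<in> B}) / real n) = emeasure (pm n (\<lambda>_. 1 / n) (\<lambda>i. X i \<omega>)) B"
      by (simp add: pm_emeasure[OF B])
  qed
  also have "\<dots> = pm n (\<lambda>_. 1 / n) (\<lambda>i. X i \<omega>)"
    using measure_of_of_measure[of "pm n (\<lambda>_. 1 / n) (\<lambda>i. X i \<omega>)"] by simp
  finally show ?thesis .
qed



lemma tconv:
  fixes \<alpha> :: real and c :: "nat \<Rightarrow> real"
  assumes a0: "0 < \<alpha>" and a1: "\<alpha> < 1" and c: "c \<longlonglongrightarrow> 1"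
  defines "t n \<equiv> (if c n \<le> 0 then 0 else if 1 \<le> \<alpha> * c n then 1 else min 1 (c n * (1 - \<alpha>) / (1 - \<alpha> * c n)))"
  shows "t \<longlonglongrightarrow> 1"
proof (rule tendsto_sandwich[where f="\<lambda>n. min 1 (c n * (1 - \<alpha>) / (1 - \<alpha> * c n))" and h="\<lambda>n. 1"])
  have "eventually (\<lambda>n. c n > 0) sequentially" using c by (intro order_tendstoD(1)) auto
  then show "eventually (\<lambda>n. min 1 (c n * (1 - \<alpha>) / (1 - \<alpha> * c n)) \<le> t n) sequentially"
    by eventually_elim (auto simp: t_def)
  show "eventually (\<lambda>n. t n \<le> 1) sequentially" by (intro always_eventually) (auto simp: t_def)
  have "(\<lambda>n. c n * (1 - \<alpha>) / (1 - \<alpha> * c n)) \<longlonglongrightarrow> 1 * (1 - \<alpha>) / (1 - \<alpha> * 1)"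
    using a1 by (intro tendsto_intros c) auto
  then have "(\<lambda>n. min 1 (c n * (1 - \<alpha>) / (1 - \<alpha> * c n))) \<longlonglongrightarrow> min 1 (1 * (1 - \<alpha>) / (1 - \<alpha> * 1))"
    by (intro tendsto_min tendsto_const)
  then show "(\<lambda>n. min 1 (c n * (1 - \<alpha>) / (1 - \<alpha> * c n))) \<longlonglongrightarrow> 1" using a1 by simp
qed simp

lemma wbound:
  fixes \<alpha> c x t n :: real
  assumes a0: "0 < \<alpha>" and a1: "\<alpha> \<le> 1" and x0: "0 \<le> x" and x1: "x \<le> 1 / \<alpha>" and n: "0 < n"
    and t: "t = (if c \<le> 0 then 0 else if 1 \<le> \<alpha> * c then 1 else min 1 (c * (1 - \<alpha>) / (1 - \<alpha> * c)))"
  shows "0 \<le> t * x / (n * c) + (1 - t) / n" and "t * x / (n * c) + (1 - t) / n \<le> 1 / (n * \<alpha>)"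
proof -
  have t01: "0 \<le> t" "t \<le> 1"
  proof -
    have "0 \<le> c * (1 - \<alpha>) / (1 - \<alpha> * c)" if "c > 0" "\<alpha> * c < 1" using that a1 by simp
    then show "0 \<le> t" "t \<le> 1" unfolding t by auto
  qed
  have key: "t * (1 - \<alpha> * c) \<le> c * (1 - \<alpha>)" if c: "c > 0"
  proof (cases "1 \<le> \<alpha> * c")
    case True
    then have "t * (1 - \<alpha> * c) \<le> 0" using t01 by (simp add: mult_nonneg_nonpos)
    also have "0 \<le> c * (1 - \<alpha>)" using c a1 by simp
    finally show ?thesis .
  next
    case False
    then have d: "1 - \<alpha> * c > 0" by simp
    have "t \<le> c * (1 - \<alpha>) / (1 - \<alpha> * c)" unfolding t using c False by simp
    then have "t * (1 - \<alpha> * c) \<le> c * (1 - \<alpha>) / (1 - \<alpha> * c) * (1 - \<alpha> * c)"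
      using d by (intro mult_right_mono) auto
    also have "\<dots> = c * (1 - \<alpha>)" using d by simp
    finally show ?thesis .
  qed
  show "0 \<le> t * x / (n * c) + (1 - t) / n"
  proof (cases "c \<le> 0")
    case True then have "t = 0" unfolding t by simp
    then show ?thesis using n by simp
  next
    case False
    then show ?thesis using t01 x0 n by (intro add_nonneg_nonneg divide_nonneg_nonneg mult_nonneg_nonneg) auto
  qed
  show "t * x / (n * c) + (1 - t) / n \<le> 1 / (n * \<alpha>)"
  proof (cases "c \<le> 0")
    case True then have "t = 0" unfolding t by simp
    then show ?thesis using n a0 a1 by (simp add: frac_le)
  next
    case False
    then have c: "c > 0" by simp
    have "t * x / (n * c) \<le> t * (1 / \<alpha>) / (n * c)"
      using t01 x1 c n by (intro divide_right_mono mult_left_mono) auto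
    also have "t * (1 / \<alpha>) / (n * c) + (1 - t) / n = (t + (1 - t) * \<alpha> * c) / (\<alpha> * n * c)"
      using a0 n c by (simp add: field_simps)
    also have "\<dots> \<le> c / (\<alpha> * n * c)"
      using key[OF c] a0 n c by (intro divide_right_mono) (auto simp: algebra_simps)
    also have "\<dots> = 1 / (n * \<alpha>)" using c by simp
    finally show ?thesis by simp
  qed
qed

lemma det_final:
  fixes P Q :: "'a::euclidean_space measure" and p :: "nat \<Rightarrow> 'a" and g :: "'a \<Rightarrow> real" and \<alpha> :: real
  assumes a0: "0 < \<alpha>" and a1: "\<alpha> \<le> 1"
    and gm[measurable]: "g \<in> borel_measurable borel" and g0: "\<And>x. 0 \<le> g x" and g1: "\<And>x. g x \<le> 1 / \<alpha>"
    and gone: "\<alpha> = 1 \<Longrightarrow> (\<And>x. g x = 1)"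
    and U1: "\<forall>f. continuous_on UNIV f \<and> bounded (range f) \<longrightarrow>
           (\<lambda>n. (\<Sum>i<n. f (p i) * g (p i)) / n) \<longlonglongrightarrow> (\<integral>x. f x * g x \<partial>P)"
    and U2: "\<forall>f. continuous_on UNIV f \<and> bounded (range f) \<longrightarrow>
           (\<lambda>n. (\<Sum>i<n. f (p i) * 1) / n) \<longlonglongrightarrow> (\<integral>x. f x * 1 \<partial>P)"
    and intQ: "\<And>f. f \<in> borel_measurable borel \<Longrightarrow> integral\<^sup>L Q f = (\<integral>x. f x * g x \<partial>P)"
    and gint: "(\<integral>x. 1 * g x \<partial>P) = 1"
  shows "\<exists>Qs. (\<forall>n\<ge>1. Qs n \<in> trimming (pm n (\<lambda>_. 1 / n) p) \<alpha>) \<and> weakly_conv Qs Q"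
proof -
  define c where "c n = (\<Sum>i<n. g (p i)) / n" for n
  define t where "t n = (if c n \<le> 0 then 0 else if 1 \<le> \<alpha> * c n then 1 else min 1 (c n * (1 - \<alpha>) / (1 - \<alpha> * c n)))" for n
  define w where "w n i = t n * g (p i) / (n * c n) + (1 - t n) / n" for n i
  define Qs where "Qs n = pm n (w n) p" for n
  have t01: "0 \<le> t n" "t n \<le> 1" for n
  proof -
    have "0 \<le> c n * (1 - \<alpha>) / (1 - \<alpha> * c n)" if "c n > 0" "\<alpha> * c n < 1" using that a1 by simp
    then show "0 \<le> t n" "t n \<le> 1" unfolding t_def by auto
  qed
  have w0: "0 \<le> w n i" if n: "n \<ge> 1" for n i
    unfolding w_def using n by (intro wbound(1)[OF a0 a1 g0 g1, where t="t n" and c="c n"]) (auto simp: t_def)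
  have w1: "w n i \<le> 1 / (n * \<alpha>)" if n: "n \<ge> 1" for n i
    unfolding w_def using n by (intro wbound(2)[OF a0 a1 g0 g1, where t="t n" and c="c n"]) (auto simp: t_def)
  have wsum: "(\<Sum>i<n. w n i) = 1" if n: "n \<ge> 1" for n
  proof (cases "c n \<le> 0")
    case True
    then have "t n = 0" unfolding t_def by simp
    then show ?thesis unfolding w_def using n by simp
  next
    case False
    have "(\<Sum>i<n. w n i) = t n / (n * c n) * (\<Sum>i<n. g (p i)) + (1 - t n)"
      unfolding w_def using n by (simp add: sum.distrib sum_distrib_left sum_divide_distrib[symmetric])
    also have "(\<Sum>i<n. g (p i)) = n * c n" unfolding c_def using n by simp
    finally show ?thesis using False n by simp
  qed
  have trim: "Qs n \<in> trimming (pm n (\<lambda>_. 1 / n) p) \<alpha>" if n: "n \<ge> 1" for n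
    unfolding trimming_def prob_measures_def
  proof (intro CollectI conjI ballI)
    show "sets (Qs n) = sets borel" unfolding Qs_def by simp
    show "prob_space (Qs n)" unfolding Qs_def by (rule pm_prob) (use w0 wsum n in auto)
    fix B :: "'a set" assume B: "B \<in> sets borel"
    have "measure (Qs n) B = (\<Sum>i<n. w n i * indicator B (p i))"
      unfolding Qs_def by (rule pm_measure[OF B]) (use w0 n in auto)
    also have "\<dots> \<le> (\<Sum>i<n. 1 / (n * \<alpha>) * indicator B (p i))"
      by (intro sum_mono mult_right_mono w1 n) auto
    also have "\<dots> = (\<Sum>i<n. 1 / n * indicator B (p i)) / \<alpha>"
      by (simp add: sum_divide_distrib)
    also have "(\<Sum>i<n. 1 / n * indicator B (p i)) = measure (pm n (\<lambda>_. 1 / n) p) B"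
      by (rule pm_measure[OF B, symmetric]) simp
    finally show "measure (Qs n) B \<le> measure (pm n (\<lambda>_. 1 / n) p) B / \<alpha>" .
  qed
  have c1: "c \<longlonglongrightarrow> 1"
    using U1[rule_format, of "\<lambda>_. 1"] gint unfolding c_def by simp
  have t1: "t \<longlonglongrightarrow> 1"
  proof (cases "\<alpha> = 1")
    case True
    have "eventually (\<lambda>n. t n = 1) sequentially"
      unfolding eventually_sequentially
    proof (intro exI allI impI)
      fix n :: nat assume "n \<ge> 1"
      then have "c n = 1" unfolding c_def using gone[OF True] by simp
      then show "t n = 1" unfolding t_def using True by simp
    qed
    then show ?thesis by (rule tendsto_eventually)
  next
    case False
    then have "\<alpha> < 1" using a1 by simp
    then show ?thesis unfolding t_def by (rule tconv[OF a0 _ c1])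
  qed
  have "weakly_conv Qs Q"
    unfolding weakly_conv_def
  proof (intro allI impI)
    fix f :: "'a \<Rightarrow> real" assume f: "continuous_on UNIV f \<and> bounded (range f)"
    have fm[measurable]: "f \<in> borel_measurable borel" using f by (intro borel_measurable_continuous_onI) simp
    have eq: "integral\<^sup>L (Qs n) f = t n * (1 / c n) * ((\<Sum>i<n. f (p i) * g (p i)) / n) + (1 - t n) * ((\<Sum>i<n. f (p i) * 1) / n)" for n
    proof (cases "n \<ge> 1")
      case True
      have "integral\<^sup>L (Qs n) f = (\<Sum>i<n. w n i * f (p i))"
        unfolding Qs_def by (rule pm_integral) (use w0 True in auto)
      also have "\<dots> = t n * (1 / c n) * ((\<Sum>i<n. f (p i) * g (p i)) / n) + (1 - t n) * ((\<Sum>i<n. f (p i) * 1) / n)"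
        unfolding w_def by (simp add: distrib_right sum.distrib sum_distrib_left sum_divide_distrib algebra_simps)
      finally show ?thesis .
    next
      case False
      then have "n = 0" by simp
      have "integral\<^sup>L (Qs n) f = (\<Sum>i<n. w n i * f (p i))"
        unfolding Qs_def by (rule pm_integral) (use \<open>n = 0\<close> in \<open>auto simp: w_def\<close>)
      then show ?thesis using \<open>n = 0\<close> by simp
    qed
    have "(\<lambda>n. t n * (1 / c n) * ((\<Sum>i<n. f (p i) * g (p i)) / n) + (1 - t n) * ((\<Sum>i<n. f (p i) * 1) / n))
        \<longlonglongrightarrow> 1 * (1 / 1) * (\<integral>x. f x * g x \<partial>P) + (1 - 1) * (\<integral>x. f x * 1 \<partial>P)"
      using U1[rule_format, OF f] U2[rule_format, OF f] t1 c1
      by (intro tendsto_intros) auto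
    then show "(\<lambda>n. integral\<^sup>L (Qs n) f) \<longlonglongrightarrow> integral\<^sup>L Q f"
      unfolding eq intQ[OF fm] by simp
  qed
  then show ?thesis using trim by blast
qed



lemma main_with_g:
  fixes M :: "'w measure" and X :: "nat \<Rightarrow> 'w \<Rightarrow> 'a::euclidean_space"
    and P Q :: "'a measure" and \<alpha> :: real
  assumes "prob_space M"
    and "prob_space.indep_vars M (\<lambda>_. borel) X UNIV"
    and "\<And>i. X i \<in> borel_measurable M"
    and "\<And>i. distr M borel (X i) = P"
    and "P \<in> prob_measures"
    and "0 < \<alpha>" and "\<alpha> \<le> 1"
    and "Q \<in> trimming P \<alpha>"
    and gm: "g \<in> borel_measurable borel" and g0: "\<And>x. 0 \<le> g x"
    and g1: "\<And>x. g x \<le> 1 / \<alpha>" and Qd: "Q = density P (\<lambda>x. ennreal (g x))"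
    and gone: "\<alpha> = 1 \<Longrightarrow> (\<And>x. g x = 1)"
  shows "AE \<omega> in M. \<exists>Qs :: nat \<Rightarrow> 'a measure.
           (\<forall>n\<ge>1. Qs n \<in> trimming (empirical X n \<omega>) \<alpha>) \<and> weakly_conv Qs Q"
proof -
  note M = assms(1) and ind = assms(2) and Xm = assms(3) and XP = assms(4) and PP = assms(5)
    and a0 = assms(6) and a1 = assms(7) and QT = assms(8)
  have gm'[measurable]: "g \<in> borel_measurable borel" by (rule gm)
  have sP: "sets P = sets borel" using PP unfolding prob_measures_def by auto
  have gP[measurable]: "g \<in> borel_measurable P" using gm by (simp only: measurable_cong_sets[OF sP refl])
  have intQ: "integral\<^sup>L Q f = (\<integral>x. f x * g x \<partial>P)" if fm[measurable]: "f \<in> borel_measurable borel" for f :: "'a \<Rightarrow> real"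
  proof -
    have fP: "f \<in> borel_measurable P" using fm by (simp only: measurable_cong_sets[OF sP refl])
    have "integral\<^sup>L Q f = (\<integral>x. g x *\<^sub>R f x \<partial>P)" unfolding Qd
      by (rule integral_density[OF fP gP]) (simp add: g0)
    then show ?thesis by (simp add: mult.commute)
  qed
  have gint: "(\<integral>x. 1 * g x \<partial>P) = 1"
  proof -
    have Qp: "prob_space Q" using QT unfolding trimming_def prob_measures_def by auto
    have "(\<integral>x. 1 * g x \<partial>P) = integral\<^sup>L Q (\<lambda>_. 1)" using intQ[of "\<lambda>_. 1"] by simp
    also have "\<dots> = 1" using prob_space.prob_space[OF Qp] by simp
    finally show ?thesis .
  qed
  have U1: "AE \<omega> in M. \<forall>f. continuous_on UNIV f \<and> bounded (range f) \<longrightarrow>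
           (\<lambda>n. (\<Sum>i<n. f (X i \<omega>) * g (X i \<omega>)) / n) \<longlonglongrightarrow> (\<integral>x. f x * g x \<partial>P)"
    by (rule unif_slln[OF M ind Xm XP PP gm g0 g1])
  have U2: "AE \<omega> in M. \<forall>f. continuous_on UNIV f \<and> bounded (range f) \<longrightarrow>
           (\<lambda>n. (\<Sum>i<n. f (X i \<omega>) * 1) / n) \<longlonglongrightarrow> (\<integral>x. f x * 1 \<partial>P)"
    by (rule unif_slln[OF M ind Xm XP PP, where H=1]) auto
  from U1 U2 show ?thesis
  proof (eventually_elim)
    case (elim \<omega>)
    obtain Qs where Qs: "\<forall>n\<ge>1. Qs n \<in> trimming (pm n (\<lambda>_. 1 / n) (\<lambda>i. X i \<omega>)) \<alpha>" "weakly_conv Qs Q"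
      using det_final[OF a0 a1 gm g0 g1 gone elim(1) elim(2) intQ gint] by blast
    have "\<forall>n\<ge>1. Qs n \<in> trimming (empirical X n \<omega>) \<alpha>"
      using Qs(1) by (simp add: empirical_pm)
    then show ?case using Qs(2) by blast
  qed
qed


theorem proposition9:
  fixes M :: "'w measure" and X :: "nat \<Rightarrow> 'w \<Rightarrow> 'a::euclidean_space"
    and P Q :: "'a measure" and \<alpha> :: real
  assumes "prob_space M"
    and "prob_space.indep_vars M (\<lambda>_. borel) X UNIV"
    and "\<And>i. X i \<in> borel_measurable M"
    and "\<And>i. distr M borel (X i) = P"
    and "P \<in> prob_measures"
    and "0 < \<alpha>" and "\<alpha> \<le> 1"
    and "Q \<in> trimming P \<alpha>"
  shows "AE \<omega> in M. \<exists>Qs :: nat \<Rightarrow> 'a measure.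
           (\<forall>n\<ge>1. Qs n \<in> trimming (empirical X n \<omega>) \<alpha>) \<and> weakly_conv Qs Q"
proof -
  obtain g where g: "g \<in> borel_measurable borel" "\<And>x. 0 \<le> g x"
    "\<And>x. g x \<le> 1 / \<alpha>" "Q = density P (\<lambda>x. ennreal (g x))" "\<alpha> = 1 \<longrightarrow> (\<forall>x. g x = 1)"
    by (rule trim_density[OF assms(5-8)]) blast
  have g5: "\<alpha> = 1 \<Longrightarrow> (\<And>x. g x = 1)" using g(5) by blast
  show ?thesis by (rule main_with_g[OF assms g(1) g(2) g(3) g(4) g5])
qed

end
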